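(* Suppose that $\gamma\in\mathscr{M}(Q)$ is simultaneously $(\varphi,\varepsilon)$-quasicritical of type $\sigma$ and $(\varphi,\varepsilon')$-quasicritical of type $\sigma'$, for some $\varphi\in\mathbb{R}$, $\varepsilon,\varepsilon'\in(0,\pi/4)$ and sign strings $\sigma,\sigma'$. Then $\sigma'\neq-\sigma$.
   Context: $[n]=\{1,\dots,n\}$; signs $\pm$ are identified with $\pm1$. A sign string is $\sigma:[l]\to\{\pm1\}$, $l\ge2$, with alternating consecutive values; $|\sigma|=l$; $-\sigma$ is defined by $(-\sigma)(k)=-\sigma(k)$. Fix $Q=(q,z)\in\mathbb{C}\times\mathbb{S}^1$, $z\ne-1$, $\theta_1\in(-\pi,\pi)$ with $e^{i\theta_1}=z$, and $r\ge2$. $\mathscr{M}(Q)$ is the space of regular $C^r$ curves $\gamma:[0,1]\to\mathbb{C}$ with $\gamma(0)=0$, unit tangent $\mathbf{t}_\gamma(0)=1$, $\gamma(1)=q$, $\mathbf{t}_\gamma(1)=z$, curvature $\kappa_\gamma\in(-1,1)$ everywhere, and $\theta_\gamma(1)=\theta_1$, where $\theta_\gamma$ is the continuous argument of $\mathbf{t}_\gamma$ with $\theta_\gamma(0)=0$. For $\varphi\in\mathbb{R}$ write $\varphi_\pm=\varphi\pm\pi/2$. Stretchability: for $\kappa_0\in(0,1)$ and $r_0,r_b\in\mathbb{R}$, $b>0$, let $F(u)=u/\sqrt{1-u^2}$ ($|u|<1$), $F=+\infty$ for $u\ge1$, $-\infty$ for $u\le-1$; $g_\pm(x)=F(\pm\kappa_0x+r_0/\sqrt{1+r_0^2})$,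 $h_\pm(x)=F(\mp\kappa_0(x-b)+r_b/\sqrt{1+r_b^2})$; $\lambda_+$ (resp. $\lambda_-$) is the common real value of $g_+,h_+$ (resp. $g_-,h_-$) where their graphs meet, or $+\infty$ (resp. $-\infty$) if they do not. If $I\subset[0,1]$ is a closed interval and $\langle\mathbf{t}_\gamma(t),e^{i\psi}\rangle>0$ on $I$, then after translating and rotating by $-\psi$, $\gamma|_I$ is the graph $x\mapsto(x,y(x))$, $x\in[0,b]$; put $f=y'$, $r_0=f(0)$, $r_b=f(b)$. $\gamma|_I$ is $\kappa_0$-stretchable with respect to $e^{i\psi}$ if $|\kappa_\gamma|\le\kappa_0$ on $I$ and $0\in[\lambda_-,\lambda_+]$; it is stretchable with respect to $e^{i\psi}$ (or w.r.t. $\psi$) if it is $\kappa_0$-stretchable for some $\kappa_0\in(0,1)$. Quasicritical: for a sign string $\sigma$, $n=|\sigma|$, $\varphi\in\mathbb{R}$, $\varepsilon\in(0,\pi/4)$, $\gamma$ is $(\varphi,\varepsilon)$-quasicritical of type $\sigma$ if there are closed intervals $J_1<\dots<J_n$ in $[0,1]$ such that for each $k\in[n]$: (i) $\theta_\gamma(J_k)\subset(\varphi_-+2\varepsilon,\varphi_++\varepsilon)$ if $\sigma(k)=+$ and $\theta_\gamma(J_k)\subset(\varphi_--\varepsilon,\varphi_+-2\varepsilon)$ if $\sigma(k)=-$; (ii) $|\theta_\gamma(t)-\varphi|<\pi/2-2\varepsilon$ for all $t\notin\operatorname{Int}(\bigcup_kJ_k)$; (iii) $J_k$ contains a closed subinterval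 $I_k$ with $|\theta_\gamma(t)-\varphi_{\sigma(k)}|<\varepsilon$ for all $t\in I_k$ and $\gamma|_{I_k}$ stretchable with respect to $\varphi_{\sigma(k)}$. *)

theory Defs
  imports "HOL-Analysis.Analysis" "HOL-Library.Extended_Real"
begin

(* Curves are maps gamma :: real => complex, only their restriction to [0,1] matters.
   Derivatives are one-sided at the endpoints (taken within [0,1]). *)

definition dgam :: "(real \<Rightarrow> complex) \<Rightarrow> real \<Rightarrow> complex" where
  "dgam \<gamma> t = vector_derivative \<gamma> (at t within {0..1})"

definition ddgam :: "(real \<Rightarrow> complex) \<Rightarrow> real \<Rightarrow> complex" where
  "ddgam \<gamma> t = vector_derivative (dgam \<gamma>) (at t within {0..1})"

definition Cr_on01 :: "nat \<Rightarrow> (real \<Rightarrow> complex) \<Rightarrow> bool" where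
  "Cr_on01 r \<gamma> \<longleftrightarrow> (\<exists>D :: nat \<Rightarrow> real \<Rightarrow> complex. D 0 = \<gamma> \<and>
     (\<forall>j<r. \<forall>t\<in>{0..1}. (D j has_vector_derivative D (Suc j) t) (at t within {0..1})) \<and>
     continuous_on {0..1} (D r))"

definition regular_Cr_curve :: "nat \<Rightarrow> (real \<Rightarrow> complex) \<Rightarrow> bool" where
  "regular_Cr_curve r \<gamma> \<longleftrightarrow> Cr_on01 r \<gamma> \<and> (\<forall>t\<in>{0..1}. dgam \<gamma> t \<noteq> 0)"

definition unit_tangent :: "(real \<Rightarrow> complex) \<Rightarrow> real \<Rightarrow> complex" where
  "unit_tangent \<gamma> t = dgam \<gamma> t / complex_of_real (cmod (dgam \<gamma> t))"

definition curvature :: "(real \<Rightarrow> complex) \<Rightarrow> real \<Rightarrow> real" where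
  "curvature \<gamma> t = Im (cnj (dgam \<gamma> t) * ddgam \<gamma> t) / (cmod (dgam \<gamma> t)) ^ 3"

(* the continuous argument of the unit tangent on [0,1] with theta(0) = 0
   (normalised to 0 outside [0,1] so that it is unique) *)
definition theta :: "(real \<Rightarrow> complex) \<Rightarrow> real \<Rightarrow> real" where
  "theta \<gamma> = (THE \<theta>. continuous_on {0..1} \<theta> \<and> \<theta> 0 = 0 \<and>
      (\<forall>t\<in>{0..1}. cis (\<theta> t) = unit_tangent \<gamma> t) \<and> (\<forall>t. t \<notin> {0..1} \<longrightarrow> \<theta> t = 0))"

definition in_M :: "nat \<Rightarrow> complex \<Rightarrow> complex \<Rightarrow> real \<Rightarrow> (real \<Rightarrow> complex) \<Rightarrow> bool" where
  "in_M r q z \<theta>1 \<gamma> \<longleftrightarrow> regular_Cr_curve r \<gamma> \<and> \<gamma> 0 = 0 \<and> unit_tangent \<gamma> 0 = 1 \<and>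
     \<gamma> 1 = q \<and> unit_tangent \<gamma> 1 = z \<and> (\<forall>t\<in>{0..1}. \<bar>curvature \<gamma> t\<bar> < 1) \<and>
     theta \<gamma> 1 = \<theta>1"

definition Fst :: "real \<Rightarrow> ereal" where
  "Fst u = (if 1 \<le> u then \<infinity> else if u \<le> -1 then -\<infinity> else ereal (u / sqrt (1 - u\<^sup>2)))"

definition meet_val :: "(real \<Rightarrow> ereal) \<Rightarrow> (real \<Rightarrow> ereal) \<Rightarrow> ereal \<Rightarrow> ereal" where
  "meet_val g h dflt = (if \<exists>x v. g x = ereal v \<and> h x = ereal v
      then ereal (THE v. \<exists>x. g x = ereal v \<and> h x = ereal v) else dflt)"

definition lam_plus :: "real \<Rightarrow> real \<Rightarrow> real \<Rightarrow> real \<Rightarrow> ereal" where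
  "lam_plus \<kappa>0 r0 rb b = meet_val
     (\<lambda>x. Fst (\<kappa>0 * x + r0 / sqrt (1 + r0\<^sup>2)))
     (\<lambda>x. Fst (- \<kappa>0 * (x - b) + rb / sqrt (1 + rb\<^sup>2))) \<infinity>"

definition lam_minus :: "real \<Rightarrow> real \<Rightarrow> real \<Rightarrow> real \<Rightarrow> ereal" where
  "lam_minus \<kappa>0 r0 rb b = meet_val
     (\<lambda>x. Fst (- \<kappa>0 * x + r0 / sqrt (1 + r0\<^sup>2)))
     (\<lambda>x. Fst (\<kappa>0 * (x - b) + rb / sqrt (1 + rb\<^sup>2))) (-\<infinity>)"

(* After translating by -gamma(c) and rotating by -psi, the curve is the graph of y over [0,b],
   b = Re(e^{-i psi}(gamma d - gamma c)), and the slope y' at the point with parameter t equals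
   Im w / Re w with w = e^{-i psi} gamma'(t). *)
definition kstretchable :: "real \<Rightarrow> (real \<Rightarrow> complex) \<Rightarrow> real \<Rightarrow> real \<Rightarrow> real \<Rightarrow> bool" where
  "kstretchable \<kappa>0 \<gamma> \<psi> c d \<longleftrightarrow> c < d \<and> {c..d} \<subseteq> {0..1} \<and>
     (\<forall>t\<in>{c..d}. unit_tangent \<gamma> t \<bullet> cis \<psi> > 0) \<and>
     (\<forall>t\<in>{c..d}. \<bar>curvature \<gamma> t\<bar> \<le> \<kappa>0) \<and>
     (let b = Re (cis (- \<psi>) * (\<gamma> d - \<gamma> c));
          w0 = cis (- \<psi>) * dgam \<gamma> c; wb = cis (- \<psi>) * dgam \<gamma> d;
          r0 = Im w0 / Re w0; rb = Im wb / Re wb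
      in lam_minus \<kappa>0 r0 rb b \<le> 0 \<and> 0 \<le> lam_plus \<kappa>0 r0 rb b)"

definition stretchable :: "(real \<Rightarrow> complex) \<Rightarrow> real \<Rightarrow> real \<Rightarrow> real \<Rightarrow> bool" where
  "stretchable \<gamma> \<psi> c d \<longleftrightarrow> (\<exists>\<kappa>0. 0 < \<kappa>0 \<and> \<kappa>0 < 1 \<and> kstretchable \<kappa>0 \<gamma> \<psi> c d)"

(* sign strings: sigma(k) for k in [l] is the list entry sigma ! (k-1) *)
definition sign_string :: "int list \<Rightarrow> bool" where
  "sign_string s \<longleftrightarrow> 2 \<le> length s \<and> set s \<subseteq> {-1, 1} \<and>
     (\<forall>k. Suc k < length s \<longrightarrow> s ! Suc k = - (s ! k))"

definition neg_sign :: "int list \<Rightarrow> int list" where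
  "neg_sign s = map uminus s"

definition quasicritical ::
  "(real \<Rightarrow> complex) \<Rightarrow> real \<Rightarrow> real \<Rightarrow> int list \<Rightarrow> bool" where
  "quasicritical \<gamma> \<phi> \<epsilon> \<sigma> \<longleftrightarrow> sign_string \<sigma> \<and>
     (\<exists>a b :: nat \<Rightarrow> real.
        (\<forall>k<length \<sigma>. 0 \<le> a k \<and> a k \<le> b k \<and> b k \<le> 1) \<and>
        (\<forall>k. Suc k < length \<sigma> \<longrightarrow> b k < a (Suc k)) \<and>
        (\<forall>k<length \<sigma>. \<forall>t\<in>{a k..b k}.
            (\<sigma> ! k = 1 \<longrightarrow> theta \<gamma> t \<in> {\<phi> - pi/2 + 2*\<epsilon> <..< \<phi> + pi/2 + \<epsilon>}) \<and>
            (\<sigma> ! k = -1 \<longrightarrow> theta \<gamma> t \<in> {\<phi> - pi/2 - \<epsilon> <..< \<phi> + pi/2 - 2*\<epsilon>})) \<and>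
        (\<forall>t\<in>{0..1}. t \<notin> interior (\<Union>k<length \<sigma>. {a k..b k}) \<longrightarrow>
            \<bar>theta \<gamma> t - \<phi>\<bar> < pi/2 - 2*\<epsilon>) \<and>
        (\<forall>k<length \<sigma>. \<exists>c d. a k \<le> c \<and> c \<le> d \<and> d \<le> b k \<and>
            (\<forall>t\<in>{c..d}. \<bar>theta \<gamma> t - (\<phi> + real_of_int (\<sigma> ! k) * (pi/2))\<bar> < \<epsilon>) \<and>
            stretchable \<gamma> (\<phi> + real_of_int (\<sigma> ! k) * (pi/2)) c d))"

end

theory Submission
  imports Defs
begin

lemma core:
  assumes ss: "sign_string \<sigma>" and ss': "sign_string \<sigma>'"
    and qc: "quasicritical \<gamma> \<phi> \<epsilon> \<sigma>" and qc': "quasicritical \<gamma> \<phi> \<epsilon>' \<sigma>'"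
    and le: "\<epsilon>' \<le> 2*\<epsilon>" and eq: "\<sigma>' = neg_sign \<sigma>"
  shows False
proof -
  define n where "n = length \<sigma>"
  define f where "f = theta \<gamma>"
  have len: "length \<sigma>' = n" using eq by (simp add: neg_sign_def n_def)
  have n2: "2 \<le> n" using ss by (simp add: sign_string_def n_def)
  have pm: "\<And>k. k < n \<Longrightarrow> \<sigma>!k = 1 \<or> \<sigma>!k = -1"
  proof -
    fix k assume "k < n"
    then have "\<sigma>!k \<in> set \<sigma>" by (simp add: n_def)
    then show "\<sigma>!k = 1 \<or> \<sigma>!k = -1" using ss by (auto simp: sign_string_def)
  qed
  have neg: "\<And>k. k < n \<Longrightarrow> \<sigma>'!k = - \<sigma>!k" using eq by (simp add: neg_sign_def n_def)
  have alt': "\<And>k. Suc k < n \<Longrightarrow> \<sigma>'!Suc k = - \<sigma>'!k" using ss' len by (simp add: sign_string_def)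
  from qc obtain a b where
    ab1: "\<forall>k<n. 0 \<le> a k \<and> a k \<le> b k \<and> b k \<le> 1" and
    ab2: "\<forall>k. Suc k < n \<longrightarrow> b k < a (Suc k)" and
    ab3: "\<forall>k<n. \<forall>t\<in>{a k..b k}.
            (\<sigma> ! k = 1 \<longrightarrow> f t \<in> {\<phi> - pi/2 + 2*\<epsilon> <..< \<phi> + pi/2 + \<epsilon>}) \<and>
            (\<sigma> ! k = -1 \<longrightarrow> f t \<in> {\<phi> - pi/2 - \<epsilon> <..< \<phi> + pi/2 - 2*\<epsilon>})" and
    ab4: "\<forall>t\<in>{0..1}. t \<notin> interior (\<Union>k<n. {a k..b k}) \<longrightarrow>
            \<bar>f t - \<phi>\<bar> < pi/2 - 2*\<epsilon>" and
    ab5: "\<forall>k<n. \<exists>c d. a k \<le> c \<and> c \<le> d \<and> d \<le> b k \<and>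
            (\<forall>t\<in>{c..d}. \<bar>f t - (\<phi> + real_of_int (\<sigma> ! k) * (pi/2))\<bar> < \<epsilon>) \<and>
            stretchable \<gamma> (\<phi> + real_of_int (\<sigma> ! k) * (pi/2)) c d"
    using qc[unfolded quasicritical_def n_def[symmetric] f_def[symmetric], THEN conjunct2]
    by (elim exE conjE) (rule that; assumption)
  from qc' obtain a' b' where
    ab1': "\<forall>k<n. 0 \<le> a' k \<and> a' k \<le> b' k \<and> b' k \<le> 1" and
    ab2': "\<forall>k. Suc k < n \<longrightarrow> b' k < a' (Suc k)" and
    ab3': "\<forall>k<n. \<forall>t\<in>{a' k..b' k}.
            (\<sigma>' ! k = 1 \<longrightarrow> f t \<in> {\<phi> - pi/2 + 2*\<epsilon>' <..< \<phi> + pi/2 + \<epsilon>'}) \<and>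
            (\<sigma>' ! k = -1 \<longrightarrow> f t \<in> {\<phi> - pi/2 - \<epsilon>' <..< \<phi> + pi/2 - 2*\<epsilon>'})" and
    ab4': "\<forall>t\<in>{0..1}. t \<notin> interior (\<Union>k<n. {a' k..b' k}) \<longrightarrow>
            \<bar>f t - \<phi>\<bar> < pi/2 - 2*\<epsilon>'" and
    ab5': "\<forall>k<n. \<exists>c d. a' k \<le> c \<and> c \<le> d \<and> d \<le> b' k \<and>
            (\<forall>t\<in>{c..d}. \<bar>f t - (\<phi> + real_of_int (\<sigma>' ! k) * (pi/2))\<bar> < \<epsilon>') \<and>
            stretchable \<gamma> (\<phi> + real_of_int (\<sigma>' ! k) * (pi/2)) c d"
    using qc'[unfolded quasicritical_def len f_def[symmetric], THEN conjunct2]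
    by (elim exE conjE) (rule that; assumption)
  have "\<forall>k. \<exists>t. k < n \<longrightarrow> a' k \<le> t \<and> t \<le> b' k \<and> \<bar>f t - (\<phi> + real_of_int (\<sigma>' ! k) * (pi/2))\<bar> < \<epsilon>'"
  proof
    fix k show "\<exists>t. k < n \<longrightarrow> a' k \<le> t \<and> t \<le> b' k \<and> \<bar>f t - (\<phi> + real_of_int (\<sigma>' ! k) * (pi/2))\<bar> < \<epsilon>'"
    proof (cases "k < n")
      case True
      then obtain c d where "a' k \<le> c" "c \<le> d" "d \<le> b' k"
        "\<forall>t\<in>{c..d}. \<bar>f t - (\<phi> + real_of_int (\<sigma>' ! k) * (pi/2))\<bar> < \<epsilon>'" using ab5' by blast
      then show ?thesis by (intro exI[of _ c]) auto
    qed auto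
  qed
  then obtain q where q: "\<And>k. k < n \<Longrightarrow> a' k \<le> q k \<and> q k \<le> b' k \<and> \<bar>f (q k) - (\<phi> + real_of_int (\<sigma>' ! k) * (pi/2))\<bar> < \<epsilon>'"
    by metis
  have exj: "\<exists>j. k < n \<longrightarrow> j < n \<and> a j \<le> q k \<and> q k \<le> b j \<and> \<sigma>!j = \<sigma>'!k" for k
  proof (cases "k < n")
    case kn: True
    have q01: "q k \<in> {0..1}" using q[OF kn] ab1' kn by fastforce
    have qk: "\<bar>f (q k) - (\<phi> + real_of_int (\<sigma>' ! k) * (pi/2))\<bar> < \<epsilon>'" using q[OF kn] by blast
    have s': "\<sigma>'!k = 1 \<or> \<sigma>'!k = -1" using pm[OF kn] neg[OF kn] by auto
    show ?thesis
    proof (cases "\<exists>j<n. a j \<le> q k \<and> q k \<le> b j")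
      case True
      then obtain j where j: "j < n" "a j \<le> q k" "q k \<le> b j" by blast
      have "\<sigma>!j = \<sigma>'!k"
      proof (rule ccontr)
        assume ne: "\<sigma>!j \<noteq> \<sigma>'!k"
        have sj: "\<sigma>!j = 1 \<or> \<sigma>!j = -1" using pm[OF j(1)] .
        have b3: "(\<sigma> ! j = 1 \<longrightarrow> f (q k) \<in> {\<phi> - pi/2 + 2*\<epsilon> <..< \<phi> + pi/2 + \<epsilon>}) \<and>
            (\<sigma> ! j = -1 \<longrightarrow> f (q k) \<in> {\<phi> - pi/2 - \<epsilon> <..< \<phi> + pi/2 - 2*\<epsilon>})"
          using ab3 j by auto
        have c: "(\<sigma>!j = 1 \<and> \<sigma>'!k = -1) \<or> (\<sigma>!j = -1 \<and> \<sigma>'!k = 1)" using sj s' ne by auto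
        then show False
        proof
          assume h: "\<sigma>!j = 1 \<and> \<sigma>'!k = -1"
          then have "\<phi> - pi/2 + 2*\<epsilon> < f (q k)" using b3 by simp
          moreover have "\<bar>f (q k) - (\<phi> - pi/2)\<bar> < \<epsilon>'" using qk h by simp
          ultimately show False using le by linarith
        next
          assume h: "\<sigma>!j = -1 \<and> \<sigma>'!k = 1"
          then have "f (q k) < \<phi> + pi/2 - 2*\<epsilon>" using b3 by simp
          moreover have "\<bar>f (q k) - (\<phi> + pi/2)\<bar> < \<epsilon>'" using qk h by simp
          ultimately show False using le by linarith
        qed
      qed
      then show ?thesis using j by blast
    next
      case False
      have "q k \<notin> (\<Union>k<n. {a k..b k})" using False by auto
      then have "q k \<notin> interior (\<Union>k<n. {a k..b k})" using interior_subset by blast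
      then have "\<bar>f (q k) - \<phi>\<bar> < pi/2 - 2*\<epsilon>" using ab4 q01 by blast
      have False using s'
      proof
        assume h: "\<sigma>'!k = 1"
        have "\<bar>f (q k) - (\<phi> + pi/2)\<bar> < \<epsilon>'" using qk h by simp
        then show False using le \<open>\<bar>f (q k) - \<phi>\<bar> < pi/2 - 2*\<epsilon>\<close> by linarith
      next
        assume h: "\<sigma>'!k = -1"
        have "\<bar>f (q k) - (\<phi> - pi/2)\<bar> < \<epsilon>'" using qk h by simp
        then show False using le \<open>\<bar>f (q k) - \<phi>\<bar> < pi/2 - 2*\<epsilon>\<close> by linarith
      qed
      then show ?thesis ..
    qed
  qed auto
  then obtain j where j: "\<And>k. k < n \<Longrightarrow> j k < n \<and> a (j k) \<le> q k \<and> q k \<le> b (j k) \<and> \<sigma>!(j k) = \<sigma>'!k"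
    by metis
  have ord: "b i < a (Suc i + d)" if "Suc i + d < n" for i d
    using that
  proof (induction d)
    case 0 then show ?case using ab2 by simp
  next
    case (Suc d)
    then have "b i < a (Suc i + d)" by simp
    moreover have "a (Suc i + d) \<le> b (Suc i + d)" using ab1 Suc.prems by simp
    moreover have "b (Suc i + d) < a (Suc (Suc i + d))" using ab2 Suc.prems by simp
    ultimately show ?case by simp
  qed
  have ord2: "b i < a l" if "i < l" "l < n" for i l
    using ord[of i "l - Suc i"] that by simp
  have jinc: "j k < j (Suc k)" if sk: "Suc k < n" for k
  proof -
    have kn: "k < n" using sk by simp
    have qlt: "q k < q (Suc k)" using q[OF kn] q[OF sk] ab2' sk by force
    have "j (Suc k) \<noteq> j k"
    proof
      assume e: "j (Suc k) = j k"
      have "\<sigma>!(j k) = \<sigma>'!k" "\<sigma>!(j (Suc k)) = \<sigma>'!Suc k" using j kn sk by auto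
      then have "\<sigma>!(j k) = - \<sigma>!(j k)" using e alt'[OF sk] by simp
      moreover have "\<sigma>!(j k) = 1 \<or> \<sigma>!(j k) = -1" using pm j kn by blast
      ultimately show False by auto
    qed
    moreover have "\<not> j (Suc k) < j k"
    proof
      assume lt: "j (Suc k) < j k"
      have "b (j (Suc k)) < a (j k)" using ord2[OF lt] j kn by blast
      then show False using j[OF kn] j[OF sk] qlt by linarith
    qed
    ultimately show ?thesis by simp
  qed
  have j0: "1 \<le> j 0"
  proof (rule ccontr)
    assume "\<not> 1 \<le> j 0"
    then have e: "j 0 = 0" by simp
    have "0 < n" using n2 by simp
    then have "\<sigma>!0 = \<sigma>'!0" using j[of 0] e by simp
    then have "\<sigma>!0 = - \<sigma>!0" using neg \<open>0 < n\<close> by simp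
    then show False using pm \<open>0 < n\<close> by fastforce
  qed
  have "k < n \<longrightarrow> Suc k \<le> j k" for k
  proof (induction k)
    case 0 then show ?case using j0 by simp
  next
    case (Suc k) then show ?case using jinc[of k] by (metis Suc_le_eq Suc_lessD less_trans_Suc)
  qed
  then have "Suc (n - 1) \<le> j (n - 1)" using n2 by (metis diff_less zero_less_numeral less_le_trans zero_less_one)
  moreover have "j (n - 1) < n" using j[of "n-1"] n2 by simp
  ultimately show False using n2 by simp
qed

theorem lemma4p6:
  fixes \<gamma> :: "real \<Rightarrow> complex" and q z :: complex and \<theta>1 \<phi> \<epsilon> \<epsilon>' :: real
    and r :: nat and \<sigma> \<sigma>' :: "int list"
  assumes "cmod z = 1" and "z \<noteq> -1" and "-pi < \<theta>1" and "\<theta>1 < pi" and "cis \<theta>1 = z"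
    and "2 \<le> r"
    and "in_M r q z \<theta>1 \<gamma>"
    and "0 < \<epsilon>" and "\<epsilon> < pi/4" and "0 < \<epsilon>'" and "\<epsilon>' < pi/4"
    and "sign_string \<sigma>" and "sign_string \<sigma>'"
    and "quasicritical \<gamma> \<phi> \<epsilon> \<sigma>"
    and "quasicritical \<gamma> \<phi> \<epsilon>' \<sigma>'"
  shows "\<sigma>' \<noteq> neg_sign \<sigma>"
proof
  assume e: "\<sigma>' = neg_sign \<sigma>"
  have e2: "\<sigma> = neg_sign \<sigma>'" using e by (simp add: neg_sign_def comp_def)
  show False
  proof (cases "\<epsilon>' \<le> \<epsilon>")
    case True
    then show False using core[OF assms(12,13,14,15) _ e] assms by linarith
  next
    case False
    then show False using core[OF assms(13,12,15,14) _ e2] assms by linarith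
  qed
qed

end
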